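(* Let $A=(A_1,\dots,A_n)\in\mathbb{Z}^{d\times n}$ have rank $d$. The Basic Generalized Euclidean Algorithm (described in the context) terminates on input $A$, and the matrix $B$ it returns is a basis of $\mathcal{L}(A)$, i.e. $B\in\mathbb{Z}^{d\times d}$ and $\mathcal{L}(B)=\mathcal{L}(A)$.
   Context: For a matrix $M$ with columns $M_1,\dots,M_m$, $\mathcal{L}(M)=\{\sum_i\lambda_iM_i:\lambda\in\mathbb{Z}^m\}$. For real $y$, $\lfloor y\rceil:=\lfloor y+1/2\rfloor$ is the nearest integer. Basic Generalized Euclidean Algorithm. Input: $A=(A_1,\dots,A_n)\in\mathbb{Z}^{d\times n}$ of rank $d$. 1. Choose $d$ linearly independent columns of $A$ and let $B=(B_1,\dots,B_d)$ be the matrix they form. Let $C$ be the multiset of the remaining $n-d$ columns. 2. While $C\neq\emptyset$: - choose any $c\in C$ and compute $x\in\mathbb{Q}^d$ with $Bx=c$; - if $x\in\mathbb{Z}^d$, remove $c$ from $C$; - otherwise choose an index $\ell$ with $x_\ell\notin\mathbb{Z}$, remove $c$ from $C$, add the current column $B_\ell$ to $C$, and replace the column $B_\ell$ by $c-\bigl(B_\ell\lfloor x_\ell\rceil+\sum_{j\neq\ell}B_j\lfloor x_j\rfloor\bigr)$. 3. Return $B$. *)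

theory Defs
  imports "HOL-Analysis.Analysis" "HOL-Library.Multiset"
begin

text \<open>Integer vectors of dimension d are int^'d; the dimension d is CARD('d).
  The input matrix A has columns A 0, ..., A (n-1).\<close>

definition rv :: "int ^ 'd \<Rightarrow> real ^ 'd" where
  "rv v = (\<chi> i. real_of_int (v $ i))"

definition round_near :: "real \<Rightarrow> int" where
  "round_near y = \<lfloor>y + 1/2\<rfloor>"

definition lattice_cols :: "(nat \<Rightarrow> int ^ 'd) \<Rightarrow> nat \<Rightarrow> (int ^ 'd) set" where
  "lattice_cols A n = {v. \<exists>lam::nat \<Rightarrow> int. v = (\<Sum>i<n. lam i *s A i)}"

definition lattice_basis :: "('d::finite \<Rightarrow> int ^ 'd) \<Rightarrow> (int ^ 'd) set" where
  "lattice_basis B = {v. \<exists>lam::'d \<Rightarrow> int. v = (\<Sum>j\<in>UNIV. lam j *s B j)}"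

text \<open>Rank of the d x n matrix A equals d (column rank over the reals = rationals).\<close>
definition full_rank :: "(nat \<Rightarrow> int ^ 'd::finite) \<Rightarrow> nat \<Rightarrow> bool" where
  "full_rank A n \<longleftrightarrow> dim ((\<lambda>i. rv (A i)) ` {..<n}) = CARD('d)"

type_synonym 'd gea_state = "('d \<Rightarrow> int ^ 'd) \<times> (int ^ 'd) multiset"

text \<open>Step 1: B consists of d linearly independent columns (distinct column indices),
  C is the multiset of the remaining n - d columns.\<close>
definition gea_init :: "(nat \<Rightarrow> int ^ 'd::finite) \<Rightarrow> nat \<Rightarrow> 'd gea_state \<Rightarrow> bool" where
  "gea_init A n s \<longleftrightarrow> (\<exists>\<sigma>::'d \<Rightarrow> nat.
      inj \<sigma> \<and> (\<forall>j. \<sigma> j < n) \<and>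
      inj (\<lambda>j. rv (A (\<sigma> j))) \<and> independent (range (\<lambda>j. rv (A (\<sigma> j)))) \<and>
      s = ((\<lambda>j. A (\<sigma> j)), mset (map A (filter (\<lambda>i. i \<notin> range \<sigma>) [0..<n]))))"

text \<open>One iteration of the while loop (all nondeterministic choices allowed).\<close>
definition gea_step :: "'d::finite gea_state \<Rightarrow> 'd gea_state \<Rightarrow> bool" where
  "gea_step s s' \<longleftrightarrow> (case s of (B, C) \<Rightarrow>
     \<exists>c. c \<in># C \<and> (\<exists>x :: real ^ 'd.
        (\<forall>j. x $ j \<in> \<rat>) \<and> (\<Sum>j\<in>UNIV. x $ j *\<^sub>R rv (B j)) = rv c \<and>
        (((\<forall>j. x $ j \<in> \<int>) \<and> s' = (B, C - {#c#})) \<or>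
         (\<exists>l. x $ l \<notin> \<int> \<and>
            s' = (B(l := c - (round_near (x $ l) *s B l +
                               (\<Sum>j\<in>UNIV - {l}. \<lfloor>x $ j\<rfloor> *s B j))),
                  (C - {#c#}) + {#B l#})))))"

end

theory Submission imports Defs begin

lemma rv_diff: "rv (u - v) = rv u - rv v" by (simp add: rv_def vec_eq_iff)
lemma rv_add: "rv (u + v) = rv u + rv v" by (simp add: rv_def vec_eq_iff)
lemma rv_smult: "rv (k *s v) = real_of_int k *\<^sub>R rv v" by (simp add: rv_def vec_eq_iff)
lemma rv_zero: "rv 0 = 0" by (simp add: rv_def vec_eq_iff)
lemma rv_sum: "rv (sum f S) = (\<Sum>x\<in>S. rv (f x))"
  by (induction S rule: infinite_finite_induct) (auto simp: rv_add rv_zero)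
lemma rv_inj: "rv u = rv v \<Longrightarrow> u = v" by (simp add: rv_def vec_eq_iff)

definition Mr :: "('d::finite \<Rightarrow> int^'d) \<Rightarrow> real^'d^'d" where
  "Mr B = (\<chi> i j. real_of_int (B j $ i))"
definition Mi :: "('d::finite \<Rightarrow> int^'d) \<Rightarrow> int^'d^'d" where
  "Mi B = (\<chi> i j. B j $ i)"

lemma det_Mr: "det (Mr B) = real_of_int (det (Mi B))"
  unfolding det_def Mr_def Mi_def by (simp add: of_int_sum of_int_prod)

lemma Mr_mult: "Mr B *v x = (\<Sum>j\<in>UNIV. x$j *\<^sub>R rv (B j))"
  by (simp add: vec_eq_iff Mr_def matrix_vector_mult_def rv_def mult.commute)

inductive_set zspan :: "('a::ab_group_add) set \<Rightarrow> 'a set" for S where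
  zero: "0 \<in> zspan S"
| base: "v \<in> S \<Longrightarrow> v \<in> zspan S"
| add: "u \<in> zspan S \<Longrightarrow> v \<in> zspan S \<Longrightarrow> u + v \<in> zspan S"
| neg: "u \<in> zspan S \<Longrightarrow> - u \<in> zspan S"

lemma zspan_sub: "S \<subseteq> zspan T \<Longrightarrow> zspan S \<subseteq> zspan T"
proof
  fix v assume "S \<subseteq> zspan T" "v \<in> zspan S"
  from \<open>v \<in> zspan S\<close> show "v \<in> zspan T"
    by (induction rule: zspan.induct) (use \<open>S \<subseteq> zspan T\<close> in \<open>auto intro: zspan.intros\<close>)
qed

lemma zspan_mono: "S \<subseteq> T \<Longrightarrow> zspan S \<subseteq> zspan T"
  by (rule zspan_sub) (auto intro: zspan.base)

lemma zspan_eq: "S \<subseteq> zspan T \<Longrightarrow> T \<subseteq> zspan S \<Longrightarrow> zspan S = zspan T"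
  by (simp add: subset_antisym zspan_sub)

lemma zspan_diff: "u \<in> zspan S \<Longrightarrow> v \<in> zspan S \<Longrightarrow> u - v \<in> zspan S"
  by (metis diff_conv_add_uminus zspan.add zspan.neg)

lemma zspan_sum: "finite I \<Longrightarrow> (\<And>i. i \<in> I \<Longrightarrow> f i \<in> zspan S) \<Longrightarrow> sum f I \<in> zspan S"
  by (induction I rule: finite_induct) (auto intro: zspan.intros)

lemma zspan_smult_nat: "v \<in> zspan S \<Longrightarrow> (int k) *s v \<in> zspan S"
proof (induction k)
  case 0 then show ?case by (simp add: zspan.zero vector_smult_lzero)
next
  case (Suc k)
  have "int (Suc k) *s v = v + int k *s v" by (simp add: vec_eq_iff algebra_simps)
  then show ?case using Suc by (simp add: zspan.add)
qed

lemma zspan_smult: "v \<in> zspan S \<Longrightarrow> (k::int) *s v \<in> zspan S"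
proof (cases "k \<ge> 0")
  case True
  then obtain m where "k = int m" by (intro that[of "nat k"]) simp
  then show "v \<in> zspan S \<Longrightarrow> k *s v \<in> zspan S" using zspan_smult_nat by blast
next
  case False
  then obtain m where m: "k = - int m" by (intro that[of "nat (-k)"]) simp
  have "k *s v = - (int m *s v)" by (simp add: m vec_eq_iff)
  then show "v \<in> zspan S \<Longrightarrow> k *s v \<in> zspan S" using zspan_smult_nat[of v S m] zspan.neg by simp
qed

lemma lattice_basis_zspan: "lattice_basis B = zspan (range B)"
proof
  show "lattice_basis B \<subseteq> zspan (range B)"
    unfolding lattice_basis_def
    by (auto intro!: zspan_sum zspan_smult intro: zspan.base)
  show "zspan (range B) \<subseteq> lattice_basis B"
  proof
    fix v assume "v \<in> zspan (range B)"
    then show "v \<in> lattice_basis B"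
    proof (induction rule: zspan.induct)
      case zero
      then show ?case unfolding lattice_basis_def
        by (rule CollectI, rule exI[of _ "\<lambda>_. 0"]) (simp add: vector_smult_lzero)
    next
      case (base v)
      then obtain j where j: "v = B j" by auto
      have "(\<Sum>i\<in>UNIV. (if i = j then 1 else 0) *s B i) = (\<Sum>i\<in>UNIV. if i = j then B i else 0)"
        by (rule sum.cong) (auto simp: vector_smult_lzero)
      also have "\<dots> = B j" by simp
      finally have e: "(\<Sum>i\<in>UNIV. (if i = j then 1 else 0) *s B i) = B j" .
      show ?case unfolding lattice_basis_def j
        by (rule CollectI, rule exI[of _ "\<lambda>i. if i = j then 1 else 0"], simp only: e)
    next
      case (add u v)
      then obtain a b where "u = (\<Sum>j\<in>UNIV. a j *s B j)" "v = (\<Sum>j\<in>UNIV. b j *s B j)"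
        unfolding lattice_basis_def by blast
      then have e: "u + v = (\<Sum>j\<in>UNIV. (a j + b j) *s B j)"
        by (simp add: sum.distrib vector_sadd_rdistrib)
      show ?case unfolding lattice_basis_def
        by (rule CollectI, rule exI[of _ "\<lambda>j. a j + b j"], rule e)
    next
      case (neg u)
      then obtain a where "u = (\<Sum>j\<in>UNIV. a j *s B j)"
        unfolding lattice_basis_def by blast
      then have e: "- u = (\<Sum>j\<in>UNIV. (- a j) *s B j)"
        by (simp add: vec_eq_iff sum_negf)
      show ?case unfolding lattice_basis_def
        by (rule CollectI, rule exI[of _ "\<lambda>j. - a j"], rule e)
    qed
  qed
qed

lemma lattice_cols_zspan: "lattice_cols A n = zspan (A ` {..<n})"
proof
  show "lattice_cols A n \<subseteq> zspan (A ` {..<n})"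
    unfolding lattice_cols_def
    by (auto intro!: zspan_sum zspan_smult intro: zspan.base)
  show "zspan (A ` {..<n}) \<subseteq> lattice_cols A n"
  proof
    fix v assume "v \<in> zspan (A ` {..<n})"
    then show "v \<in> lattice_cols A n"
    proof (induction rule: zspan.induct)
      case zero
      then show ?case unfolding lattice_cols_def
        by (rule CollectI, rule exI[of _ "\<lambda>_. 0"]) (simp add: vector_smult_lzero)
    next
      case (base v)
      then obtain j where j: "v = A j" "j < n" by auto
      have "(\<Sum>i<n. (if i = j then 1 else 0) *s A i) = (\<Sum>i<n. if i = j then A i else 0)"
        by (rule sum.cong) (auto simp: vector_smult_lzero)
      also have "\<dots> = A j" using j by simp
      finally have e: "(\<Sum>i<n. (if i = j then 1 else 0) *s A i) = A j" .
      show ?case unfolding lattice_cols_def j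
        by (rule CollectI, rule exI[of _ "\<lambda>i. if i = j then 1 else 0"], simp only: e)
    next
      case (add u v)
      then obtain a b where "u = (\<Sum>j<n. a j *s A j)" "v = (\<Sum>j<n. b j *s A j)"
        unfolding lattice_cols_def by blast
      then have e: "u + v = (\<Sum>j<n. (a j + b j) *s A j)"
        by (simp add: sum.distrib vector_sadd_rdistrib)
      show ?case unfolding lattice_cols_def
        by (rule CollectI, rule exI[of _ "\<lambda>j. a j + b j"], rule e)
    next
      case (neg u)
      then obtain a where "u = (\<Sum>j<n. a j *s A j)"
        unfolding lattice_cols_def by blast
      then have e: "- u = (\<Sum>j<n. (- a j) *s A j)"
        by (simp add: vec_eq_iff sum_negf)
      show ?case unfolding lattice_cols_def
        by (rule CollectI, rule exI[of _ "\<lambda>j. - a j"], rule e)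
    qed
  qed
qed


lemma mset_neq_diff: "v \<in># C \<Longrightarrow> v \<noteq> c \<Longrightarrow> v \<in># C - {#c#}"
  by (simp add: in_diff_count)

definition ginv :: "(nat \<Rightarrow> int^'d::finite) \<Rightarrow> nat \<Rightarrow> 'd gea_state \<Rightarrow> bool" where
 "ginv A n s \<longleftrightarrow> det (Mr (fst s)) \<noteq> 0 \<and>
    zspan (range (fst s) \<union> set_mset (snd s)) = zspan (A ` {..<n})"

lemma det_nz_of_indep:
  assumes inj: "inj (\<lambda>j. rv (B j))" and ind: "independent (range (\<lambda>j. rv (B j)))"
  shows "det (Mr B) \<noteq> 0"
proof -
  let ?g = "\<lambda>j. rv (B j)"
  have "x = 0" if "Mr B *v x = 0" for x
  proof -
    have s: "(\<Sum>j\<in>UNIV. x$j *\<^sub>R ?g j) = 0" using that by (simp add: Mr_mult)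
    have "(\<Sum>v\<in>range ?g. x $ (inv ?g v) *\<^sub>R v) = (\<Sum>j\<in>UNIV. x $ j *\<^sub>R ?g j)"
      by (simp add: sum.reindex[OF inj] inv_f_f[OF inj])
    with s have z: "(\<Sum>v\<in>range ?g. x $ (inv ?g v) *\<^sub>R v) = 0" by simp
    have "x $ j = 0" for j
      using independentD[OF ind _ subset_refl z, of "?g j"] inv_f_f[OF inj] by simp
    then show ?thesis by (simp add: vec_eq_iff)
  qed
  then obtain C where "C ** Mr B = mat 1" using matrix_left_invertible_ker by blast
  then have "det C * det (Mr B) = 1" by (metis det_mul det_I)
  then show ?thesis by auto
qed

lemma init_inv: "gea_init A n s \<Longrightarrow> ginv A n s"
proof -
  assume "gea_init A n s"
  then obtain \<sigma> where \<sigma>: "inj \<sigma>" "\<forall>j. \<sigma> j < n" "inj (\<lambda>j. rv (A (\<sigma> j)))"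
      "independent (range (\<lambda>j. rv (A (\<sigma> j))))"
   and s: "s = ((\<lambda>j. A (\<sigma> j)), mset (map A (filter (\<lambda>i. i \<notin> range \<sigma>) [0..<n])))"
    unfolding gea_init_def by blast
  have "det (Mr (\<lambda>j. A (\<sigma> j))) \<noteq> 0" by (rule det_nz_of_indep) (use \<sigma> in auto)
  moreover have "range (\<lambda>j. A (\<sigma> j)) \<union> set_mset (mset (map A (filter (\<lambda>i. i \<notin> range \<sigma>) [0..<n])))
       = A ` {..<n}"
    using \<sigma>(2) by auto
  ultimately show ?thesis unfolding ginv_def s by simp
qed

definition meas :: "('d::finite gea_state \<times> 'd gea_state) set" where
  "meas = measures [\<lambda>s. nat \<bar>det (Mi (fst s))\<bar>, \<lambda>s. size (snd s)]"

lemma step_inv: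
  assumes inv: "ginv A n s" and st: "gea_step s s'"
  shows "ginv A n s' \<and> (s', s) \<in> meas"
proof -
  obtain B C where s: "s = (B, C)" by (cases s)
  from st obtain c x where c: "c \<in># C" and eq: "(\<Sum>j\<in>UNIV. x $ j *\<^sub>R rv (B j)) = rv c"
    and cases: "((\<forall>j. x $ j \<in> \<int>) \<and> s' = (B, C - {#c#})) \<or>
         (\<exists>l. x $ l \<notin> \<int> \<and> s' = (B(l := c - (round_near (x $ l) *s B l +
               (\<Sum>j\<in>UNIV - {l}. \<lfloor>x $ j\<rfloor> *s B j))), (C - {#c#}) + {#B l#}))"
    unfolding gea_step_def s by auto
  have d: "det (Mr B) \<noteq> 0" and L: "zspan (range B \<union> set_mset C) = zspan (A ` {..<n})"
    using inv unfolding ginv_def s by auto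
  from cases show ?thesis
  proof
    assume h: "(\<forall>j. x $ j \<in> \<int>) \<and> s' = (B, C - {#c#})"
    define k where "k j = \<lfloor>x $ j\<rfloor>" for j
    have xk: "x $ j = of_int (k j)" for j using h unfolding k_def by (metis Ints_cases floor_of_int)
    have "rv c = rv (\<Sum>j\<in>UNIV. k j *s B j)" unfolding eq[symmetric] rv_sum rv_smult xk ..
    then have ce: "c = (\<Sum>j\<in>UNIV. k j *s B j)" by (rule rv_inj)
    have cz: "c \<in> zspan (range B)" unfolding ce
      by (auto intro!: zspan_sum zspan_smult intro: zspan.base)
    have "zspan (range B \<union> set_mset (C - {#c#})) = zspan (range B \<union> set_mset C)"
    proof (rule zspan_eq)
      show "range B \<union> set_mset (C - {#c#}) \<subseteq> zspan (range B \<union> set_mset C)"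
        by (auto intro: zspan.base dest: in_diffD)
      show "range B \<union> set_mset C \<subseteq> zspan (range B \<union> set_mset (C - {#c#}))"
      proof
        fix v assume v: "v \<in> range B \<union> set_mset C"
        show "v \<in> zspan (range B \<union> set_mset (C - {#c#}))"
        proof (cases "v = c")
          case True then show ?thesis
            using cz zspan_mono[of "range B" "range B \<union> set_mset (C - {#c#})"] by auto
        next
          case False then have "v \<in> range B \<union> set_mset (C - {#c#})"
            using v by (auto intro: mset_neq_diff)
          then show ?thesis by (rule zspan.base)
        qed
      qed
    qed
    moreover have "size (C - {#c#}) < size C" using c by (rule size_Diff1_less)
    ultimately show ?thesis using h d L unfolding ginv_def meas_def s by simp
  next
    assume "\<exists>l. x $ l \<notin> \<int> \<and> s' = (B(l := c - (round_near (x $ l) *s B l +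
               (\<Sum>j\<in>UNIV - {l}. \<lfloor>x $ j\<rfloor> *s B j))), (C - {#c#}) + {#B l#})"
    then obtain l where xl: "x $ l \<notin> \<int>" and s'0: "s' = (B(l := c - (round_near (x $ l) *s B l +
               (\<Sum>j\<in>UNIV - {l}. \<lfloor>x $ j\<rfloor> *s B j))), (C - {#c#}) + {#B l#})" by blast
    define r where "r = round_near (x $ l)"
    define w where "w = r *s B l + (\<Sum>j\<in>UNIV - {l}. \<lfloor>x $ j\<rfloor> *s B j)"
    define B' where "B' = B(l := c - w)"
    have s': "s' = (B', C - {#c#} + {#B l#})" using s'0 unfolding B'_def w_def r_def .
    define a where "a j = (if j = l then real_of_int r else real_of_int \<lfloor>x $ j\<rfloor>)" for j
    define y where "y = (\<chi> j. x $ j - a j)"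
    have rvw: "rv w = real_of_int r *\<^sub>R rv (B l) + (\<Sum>j\<in>UNIV - {l}. real_of_int \<lfloor>x$j\<rfloor> *\<^sub>R rv (B j))"
      by (simp add: w_def rv_add rv_sum rv_smult)
    have s1: "(\<Sum>j\<in>UNIV. a j *\<^sub>R rv (B j)) = a l *\<^sub>R rv (B l) + (\<Sum>j\<in>UNIV - {l}. a j *\<^sub>R rv (B j))"
      by (rule sum.remove) auto
    have s2: "(\<Sum>j\<in>UNIV - {l}. a j *\<^sub>R rv (B j)) = (\<Sum>j\<in>UNIV - {l}. real_of_int \<lfloor>x$j\<rfloor> *\<^sub>R rv (B j))"
      by (rule sum.cong) (auto simp: a_def)
    have aw: "(\<Sum>j\<in>UNIV. a j *\<^sub>R rv (B j)) = rv w"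
      unfolding s1 s2 rvw by (simp add: a_def)
    have My: "Mr B *v y = rv (c - w)"
      unfolding Mr_mult y_def by (simp add: scaleR_diff_left sum_subtractf eq aw rv_diff)
    have MB': "Mr B' = (\<chi> i j. if j = l then (Mr B *v y)$i else Mr B $i$j)"
      unfolding My by (simp add: vec_eq_iff Mr_def B'_def rv_def)
    have dB': "det (Mr B') = y $ l * det (Mr B)" unfolding MB' by (rule cramer_lemma)
    have yl: "y $ l = x $ l - real_of_int r" by (simp add: y_def a_def)
    have f1: "real_of_int r \<le> x $ l + 1/2" unfolding r_def round_near_def by linarith
    have f2: "x $ l + 1/2 < real_of_int r + 1" unfolding r_def round_near_def by linarith
    have ynz: "y $ l \<noteq> 0"
    proof
      assume "y $ l = 0"
      then have "x $ l = real_of_int r" using yl by simp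
      then show False using xl by simp
    qed
    have yb: "\<bar>y $ l\<bar> \<le> 1/2" using yl f1 f2 by linarith
    define D where "D = det (Mi B)"
    define D' where "D' = det (Mi B')"
    have DD: "real_of_int D' = y $ l * real_of_int D" using dB' unfolding det_Mr D_def D'_def .
    have Dnz: "D \<noteq> 0" using d unfolding det_Mr D_def by simp
    have D'nz: "D' \<noteq> 0"
    proof
      assume "D' = 0"
      then have "y $ l * real_of_int D = 0" using DD by simp
      then show False using ynz Dnz by simp
    qed
    have "\<bar>real_of_int D'\<bar> \<le> 1/2 * \<bar>real_of_int D\<bar>"
      unfolding DD abs_mult by (rule mult_right_mono[OF yb]) simp
    then have "\<bar>D'\<bar> < \<bar>D\<bar>" using Dnz by linarith
    then have mlt: "nat \<bar>D'\<bar> < nat \<bar>D\<bar>" by simp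
    have dB'nz: "det (Mr B') \<noteq> 0" using D'nz unfolding det_Mr D'_def by simp
    let ?So = "range B \<union> set_mset C"
    let ?Sn = "range B' \<union> set_mset (C - {#c#} + {#B l#})"
    have wz: "w \<in> zspan (range B)" unfolding w_def
      by (intro zspan.add zspan_smult zspan_sum) (auto intro: zspan.base)
    have Bl: "B l \<in> ?Sn" by simp
    have Bj: "B j \<in> ?Sn" for j
    proof (cases "j = l")
      case True then show ?thesis using Bl by simp
    next
      case False then have "B j = B' j" by (simp add: B'_def)
      then show ?thesis by simp
    qed
    have wz': "w \<in> zspan ?Sn"
      using zspan_mono[of "range B" ?Sn] wz Bj by blast
    have "zspan ?Sn = zspan ?So"
    proof (rule zspan_eq)
      show "?Sn \<subseteq> zspan ?So"
      proof
        fix v assume v: "v \<in> ?Sn"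
        have cz: "c \<in> zspan ?So" using c by (auto intro: zspan.base)
        have wz2: "w \<in> zspan ?So" using zspan_mono[of "range B" ?So] wz by blast
        show "v \<in> zspan ?So"
        proof (cases "v \<in> range B'")
          case True
          then obtain j where j: "v = B' j" by blast
          show ?thesis
          proof (cases "j = l")
            case True then show ?thesis using j cz wz2 by (simp add: B'_def zspan_diff)
          next
            case False then show ?thesis using j by (auto simp: B'_def intro: zspan.base)
          qed
        next
          case False
          then have "v \<in># C - {#c#} + {#B l#}" using v by blast
          then have "v \<in># C \<or> v = B l" by (auto dest: in_diffD)
          then show ?thesis by (auto intro: zspan.base)
        qed
      qed
      show "?So \<subseteq> zspan ?Sn"
      proof
        fix v assume v: "v \<in> ?So"
        show "v \<in> zspan ?Sn"
        proof (cases "v \<in> range B")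
          case True then obtain j where "v = B j" by blast
          then show ?thesis using Bj[of j] by (simp add: zspan.base)
        next
          case False
          then have vC: "v \<in># C" using v by blast
          show ?thesis
          proof (cases "v = c")
            case True
            have "B' l \<in> zspan ?Sn" by (auto intro: zspan.base)
            then have "B' l + w \<in> zspan ?Sn" using wz' by (rule zspan.add)
            then show ?thesis using True by (simp add: B'_def)
          next
            case False
            have "v \<in># C - {#c#}" by (rule mset_neq_diff[OF vC False])
            then show ?thesis by (auto intro: zspan.base)
          qed
        qed
      qed
    qed
    then show ?thesis using L dB'nz mlt unfolding ginv_def meas_def s s' D_def D'_def by simp
  qed
qed

lemma final:
  assumes inv: "ginv A n s" and ns: "\<not> (\<exists>s'. gea_step s s')"
  shows "snd s = {#}"
proof (rule ccontr)
  obtain B C where s: "s = (B, C)" by (cases s)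
  assume "snd s \<noteq> {#}"
  then obtain c where c: "c \<in># C" using s by (metis all_not_in_conv set_mset_eq_empty_iff snd_conv)
  have d: "det (Mr B) \<noteq> 0" using inv unfolding ginv_def s by auto
  define x where "x = (\<chi> k. det (\<chi> i j. if j = k then rv c $ i else Mr B $ i $ j) / det (Mr B))"
  have "Mr B *v x = rv c" using cramer[OF d] x_def by simp
  then have eq: "(\<Sum>j\<in>UNIV. x$j *\<^sub>R rv (B j)) = rv c" by (simp add: Mr_mult)
  have mk: "(\<chi> i j. if j = k then rv c $ i else Mr B $ i $ j) = Mr (B(k := c))" for k
    by (simp add: vec_eq_iff Mr_def rv_def)
  have q: "x $ k \<in> \<rat>" for k unfolding x_def mk by (auto simp: det_Mr intro!: Rats_divide)
  show False
  proof (cases "\<forall>j. x $ j \<in> \<int>")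
    case True
    have "gea_step s (B, C - {#c#})" unfolding gea_step_def s
      using c q eq True by auto
    then show False using ns by blast
  next
    case False
    then obtain l where l: "x $ l \<notin> \<int>" by blast
    have "gea_step s (B(l := c - (round_near (x $ l) *s B l +
               (\<Sum>j\<in>UNIV - {l}. \<lfloor>x $ j\<rfloor> *s B j))), (C - {#c#}) + {#B l#})"
      unfolding gea_step_def s using c q eq l by auto
    then show False using ns by blast
  qed
qed


lemma init_exists:
  fixes A :: "nat \<Rightarrow> int ^ 'd::finite"
  assumes "full_rank A n" shows "\<exists>s. gea_init A n s"
proof -
  let ?S = "(\<lambda>i. rv (A i)) ` {..<n}"
  obtain Bs where Bs: "Bs \<subseteq> ?S" "independent Bs" "card Bs = dim ?S"
    by (meson basis_exists)
  have fin: "finite Bs" using independent_bound Bs(2) by blast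
  have "card (UNIV::'d set) = card Bs" using Bs(3) assms unfolding full_rank_def by simp
  then obtain g where g: "bij_betw g (UNIV::'d set) Bs"
    using finite_same_card_bij[OF finite_class.finite_UNIV fin] by blast
  have ig: "inj g" and rg: "range g = Bs" using g by (auto simp: bij_betw_def)
  have "\<forall>j. \<exists>i. i < n \<and> rv (A i) = g j"
  proof
    fix j
    have "g j \<in> ?S" using rg Bs(1) by auto
    then show "\<exists>i. i < n \<and> rv (A i) = g j" by auto
  qed
  from choice[OF this] obtain \<sigma> where \<sigma>0: "\<forall>j. \<sigma> j < n \<and> rv (A (\<sigma> j)) = g j" by blast
  then have \<sigma>: "\<sigma> j < n \<and> rv (A (\<sigma> j)) = g j" for j by blast
  have geq: "(\<lambda>j. rv (A (\<sigma> j))) = g" using \<sigma> by auto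
  have "inj \<sigma>"
  proof (rule injI)
    fix a b assume "\<sigma> a = \<sigma> b"
    then have "g a = g b" using \<sigma>[of a] \<sigma>[of b] by simp
    then show "a = b" using ig by (simp add: inj_eq)
  qed
  moreover have i1: "inj (\<lambda>j. rv (A (\<sigma> j)))" unfolding geq by (rule ig)
  moreover have i2: "independent (range (\<lambda>j. rv (A (\<sigma> j))))" unfolding geq rg by (rule Bs(2))
  ultimately have "gea_init A n ((\<lambda>j. A (\<sigma> j)), mset (map A (filter (\<lambda>i. i \<notin> range \<sigma>) [0..<n])))"
    unfolding gea_init_def using \<sigma>0 by blast
  then show ?thesis by blast
qed

theorem theorem1:
  fixes A :: "nat \<Rightarrow> int ^ 'd::finite" and n :: nat
  assumes "full_rank A n"
  shows "(\<exists>s. gea_init A n s)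
    \<and> \<not> (\<exists>f :: nat \<Rightarrow> 'd gea_state. gea_init A n (f 0) \<and> (\<forall>k. gea_step (f k) (f (Suc k))))
    \<and> (\<forall>s0 s. gea_init A n s0 \<and> gea_step\<^sup>*\<^sup>* s0 s \<and> \<not> (\<exists>s'. gea_step s s') \<longrightarrow>
          snd s = {#} \<and> lattice_basis (fst s) = lattice_cols A n)"
proof (intro conjI)
  show "\<exists>s. gea_init A n s" by (rule init_exists[OF assms])
  show "\<not> (\<exists>f :: nat \<Rightarrow> 'd gea_state. gea_init A n (f 0) \<and> (\<forall>k. gea_step (f k) (f (Suc k))))"
  proof
    assume "\<exists>f :: nat \<Rightarrow> 'd gea_state. gea_init A n (f 0) \<and> (\<forall>k. gea_step (f k) (f (Suc k)))"
    then obtain f :: "nat \<Rightarrow> 'd gea_state" where f0: "gea_init A n (f 0)"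
      and fs: "\<And>k. gea_step (f k) (f (Suc k))" by blast
    have inv: "ginv A n (f k)" for k
    proof (induction k)
      case 0 then show ?case using f0 by (rule init_inv)
    next
      case (Suc k) show ?case by (rule conjunct1[OF step_inv[OF Suc.IH fs[of k]]])
    qed
    have "(f (Suc k), f k) \<in> meas" for k using step_inv[OF inv fs] by blast
    moreover have "wf (meas :: ('d gea_state \<times> 'd gea_state) set)"
      unfolding meas_def by (rule wf_measures)
    ultimately show False unfolding wf_iff_no_infinite_down_chain by blast
  qed
  show "\<forall>s0 s. gea_init A n s0 \<and> gea_step\<^sup>*\<^sup>* s0 s \<and> \<not> (\<exists>s'. gea_step s s') \<longrightarrow>
          snd s = {#} \<and> lattice_basis (fst s) = lattice_cols A n"
  proof (intro allI impI)
    fix s0 s :: "'d gea_state"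
    assume h: "gea_init A n s0 \<and> gea_step\<^sup>*\<^sup>* s0 s \<and> \<not> (\<exists>s'. gea_step s s')"
    from h have "gea_step\<^sup>*\<^sup>* s0 s" by blast
    then have iv: "ginv A n s"
    proof (induction rule: rtranclp_induct)
      case base then show ?case using h init_inv by blast
    next
      case (step y z) show ?case by (rule conjunct1[OF step_inv[OF step.IH step.hyps(2)]])
    qed
    have e: "snd s = {#}" using final[OF iv] h by blast
    have "lattice_basis (fst s) = lattice_cols A n"
      using iv e unfolding ginv_def lattice_basis_zspan lattice_cols_zspan by simp
    then show "snd s = {#} \<and> lattice_basis (fst s) = lattice_cols A n" using e by blast
  qed
qed

end
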